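(* Let $G=(V,E)$ be a reduced undirected graph (parallel edges allowed) with terminals $s,t$, and let $T\subseteq E$ be a tracking edge set for $G$. Then every cycle of $G$ contains an edge belonging to $T$.
   Context: An $s$-$t$ path is a simple path from $s$ to $t$. A set $T\subseteq E$ is a tracking edge set if for any two distinct $s$-$t$ paths $P_1,P_2$, the sequence of edges of $T\cap E(P_1)$ in the order traversed along $P_1$ differs from the sequence of edges of $T\cap E(P_2)$ in the order traversed along $P_2$. A graph is reduced if every vertex and every edge lies on at least one $s$-$t$ path. *)

theory Defs
  imports Main
begin

definition multigraph :: "'v set \<Rightarrow> 'e set \<Rightarrow> ('e \<Rightarrow> 'v set) \<Rightarrow> bool" where
  "multigraph V E ends \<longleftrightarrow> finite V \<and> finite E \<and>
     (\<forall>e\<in>E. \<exists>u v. u \<in> V \<and> v \<in> V \<and> ends e = {u, v})"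

definition is_walk :: "'v set \<Rightarrow> 'e set \<Rightarrow> ('e \<Rightarrow> 'v set) \<Rightarrow> 'v list \<Rightarrow> 'e list \<Rightarrow> bool" where
  "is_walk V E ends vs es \<longleftrightarrow> vs \<noteq> [] \<and> length vs = Suc (length es) \<and> set vs \<subseteq> V \<and>
     set es \<subseteq> E \<and> (\<forall>i < length es. ends (es ! i) = {vs ! i, vs ! Suc i})"

definition st_path :: "'v set \<Rightarrow> 'e set \<Rightarrow> ('e \<Rightarrow> 'v set) \<Rightarrow> 'v \<Rightarrow> 'v \<Rightarrow> 'v list \<Rightarrow> 'e list \<Rightarrow> bool" where
  "st_path V E ends s t vs es \<longleftrightarrow> is_walk V E ends vs es \<and> distinct vs \<and>
     hd vs = s \<and> last vs = t"

definition reduced :: "'v set \<Rightarrow> 'e set \<Rightarrow> ('e \<Rightarrow> 'v set) \<Rightarrow> 'v \<Rightarrow> 'v \<Rightarrow> bool" where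
  "reduced V E ends s t \<longleftrightarrow>
     (\<forall>v\<in>V. \<exists>vs es. st_path V E ends s t vs es \<and> v \<in> set vs) \<and>
     (\<forall>e\<in>E. \<exists>vs es. st_path V E ends s t vs es \<and> e \<in> set es)"

definition tracking_set :: "'v set \<Rightarrow> 'e set \<Rightarrow> ('e \<Rightarrow> 'v set) \<Rightarrow> 'v \<Rightarrow> 'v \<Rightarrow> 'e set \<Rightarrow> bool" where
  "tracking_set V E ends s t T \<longleftrightarrow> T \<subseteq> E \<and>
     (\<forall>vs1 es1 vs2 es2. st_path V E ends s t vs1 es1 \<and> st_path V E ends s t vs2 es2 \<and>
        (vs1, es1) \<noteq> (vs2, es2) \<longrightarrow> filter (\<lambda>e. e \<in> T) es1 \<noteq> filter (\<lambda>e. e \<in> T) es2)"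

text \<open>A cycle: n \<ge> 1 distinct vertices vs and n distinct edges es, where es!i joins
  vs!i and vs!((i+1) mod n). (n = 2 covers two parallel edges, n = 1 a loop.)\<close>
definition is_cycle :: "'v set \<Rightarrow> 'e set \<Rightarrow> ('e \<Rightarrow> 'v set) \<Rightarrow> 'v list \<Rightarrow> 'e list \<Rightarrow> bool" where
  "is_cycle V E ends vs es \<longleftrightarrow> es \<noteq> [] \<and> length vs = length es \<and> distinct vs \<and> distinct es \<and>
     set vs \<subseteq> V \<and> set es \<subseteq> E \<and>
     (\<forall>i < length es. ends (es ! i) = {vs ! i, vs ! ((Suc i) mod length es)})"

end

theory Submission
  imports Defs
begin

lemma walk_append:
  assumes "is_walk V E ends vs1 es1" "is_walk V E ends vs2 es2" "last vs1 = hd vs2"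
  shows "is_walk V E ends (vs1 @ tl vs2) (es1 @ es2)"
proof -
  have l1: "length vs1 = Suc (length es1)" "vs1 \<noteq> []" and l2: "length vs2 = Suc (length es2)" "vs2 \<noteq> []"
    using assms unfolding is_walk_def by auto
  have lastv: "vs1 ! length es1 = vs2 ! 0" using assms(3) l1 l2
    by (simp add: last_conv_nth hd_conv_nth)
  have tl2: "\<And>k. k < length es2 \<Longrightarrow> tl vs2 ! k = vs2 ! Suc k" using l2 by (simp add: nth_tl)
  have "set (tl vs2) \<subseteq> set vs2" by (simp add: list.set_sel(2) l2 subsetI)
  moreover have "\<forall>i < length (es1 @ es2). ends ((es1@es2) ! i) = {(vs1 @ tl vs2) ! i, (vs1 @ tl vs2) ! Suc i}"
  proof (intro allI impI)
    fix i assume i: "i < length (es1 @ es2)"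
    show "ends ((es1@es2) ! i) = {(vs1 @ tl vs2) ! i, (vs1 @ tl vs2) ! Suc i}"
    proof (cases "i < length es1")
      case True
      then show ?thesis using assms(1) l1 unfolding is_walk_def by (simp add: nth_append)
    next
      case False
      then obtain k where k: "i = length es1 + k" "k < length es2" using i
        by (metis add_diff_inverse_nat length_append nat_add_left_cancel_less)
      have e: "ends (es2 ! k) = {vs2 ! k, vs2 ! Suc k}" using assms(2) k unfolding is_walk_def by auto
      show ?thesis
      proof (cases k)
        case 0
        then show ?thesis using k e l1 lastv tl2[of 0] by (simp add: nth_append)
      next
        case (Suc m)
        then show ?thesis using k e l1 tl2[of m] tl2[of k] by (simp add: nth_append)
      qed
    qed
  qed
  ultimately show ?thesis using assms l1 l2 unfolding is_walk_def by auto
qed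

lemma walk_take:
  assumes "is_walk V E ends vs es" "k < length vs"
  shows "is_walk V E ends (take (Suc k) vs) (take k es)"
  using assms unfolding is_walk_def
  by (auto dest: in_set_takeD)

lemma walk_drop:
  assumes "is_walk V E ends vs es" "k < length vs"
  shows "is_walk V E ends (drop k vs) (drop k es)"
  using assms unfolding is_walk_def
  by (auto dest: in_set_dropD simp: add.commute add_Suc_right)

lemma walk_rev:
  assumes "is_walk V E ends vs es"
  shows "is_walk V E ends (rev vs) (rev es)"
proof -
  have l: "length vs = Suc (length es)" using assms unfolding is_walk_def by auto
  have "\<forall>i < length es. ends (rev es ! i) = {rev vs ! i, rev vs ! Suc i}"
  proof (intro allI impI)
    fix i assume i: "i < length es"
    have "ends (es ! (length es - Suc i)) = {vs ! (length es - Suc i), vs ! Suc (length es - Suc i)}"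
      using assms i unfolding is_walk_def by auto
    then show "ends (rev es ! i) = {rev vs ! i, rev vs ! Suc i}"
      using i l by (simp add: rev_nth Suc_diff_Suc insert_commute)
  qed
  then show ?thesis using assms unfolding is_walk_def by auto
qed

lemma arc_walk:
  assumes "is_cycle V E ends cvs ces"
  defines "n \<equiv> length ces"
  shows "is_walk V E ends (map (\<lambda>k. cvs ! ((a+k) mod n)) [0..<Suc L]) (map (\<lambda>k. ces ! ((a+k) mod n)) [0..<L])"
proof -
  have n: "n > 0" "length cvs = n" using assms unfolding is_cycle_def n_def by auto
  have "\<forall>i<L. ends (ces ! ((a+i) mod n)) = {cvs ! ((a+i) mod n), cvs ! ((a + Suc i) mod n)}"
  proof (intro allI impI)
    fix i assume "i < L"
    have "ends (ces ! ((a+i) mod n)) = {cvs ! ((a+i) mod n), cvs ! (Suc ((a+i) mod n) mod n)}"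
      using assms n unfolding is_cycle_def n_def by auto
    then show "ends (ces ! ((a+i) mod n)) = {cvs ! ((a+i) mod n), cvs ! ((a + Suc i) mod n)}"
      by (simp add: mod_Suc_eq)
  qed
  moreover have "set (map (\<lambda>k. cvs ! ((a+k) mod n)) [0..<Suc L]) \<subseteq> set cvs" using n by auto
  moreover have "set (map (\<lambda>k. ces ! ((a+k) mod n)) [0..<L]) \<subseteq> set ces" using n n_def by auto
  ultimately show ?thesis using assms unfolding is_walk_def is_cycle_def
    by (auto simp del: upt_Suc)
qed

lemma arc_distinct:
  assumes "is_cycle V E ends cvs ces" "L < length ces"
  shows "distinct (map (\<lambda>k. cvs ! ((a+k) mod length ces)) [0..<Suc L])"
proof -
  let ?n = "length ces"
  have n: "?n > 0" "length cvs = ?n" "distinct cvs" using assms unfolding is_cycle_def by auto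
  have "inj_on (\<lambda>k. cvs ! ((a+k) mod ?n)) {0..<Suc L}"
  proof (rule inj_onI)
    fix x y assume x: "x \<in> {0..<Suc L}" and y: "y \<in> {0..<Suc L}" and eq: "cvs ! ((a+x) mod ?n) = cvs ! ((a+y) mod ?n)"
    have "(a+x) mod ?n = (a+y) mod ?n" using eq n nth_eq_iff_index_eq by fastforce
    then show "x = y"
    proof (cases "x \<le> y")
      case True
      then have "?n dvd (a+y) - (a+x)" using \<open>(a+x) mod ?n = (a+y) mod ?n\<close> mod_eq_dvd_iff_nat[of "a+x" "a+y" ?n] by simp
      then have "?n dvd y - x" by simp
      moreover have "y - x < ?n" using y assms(2) by simp
      ultimately show ?thesis using True by (metis diff_is_0_eq dvd_imp_le le_antisym not_less neq0_conv)
    next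
      case False
      then have "?n dvd (a+x) - (a+y)" using \<open>(a+x) mod ?n = (a+y) mod ?n\<close> mod_eq_dvd_iff_nat[of "a+y" "a+x" ?n] by simp
      then have "?n dvd x - y" by simp
      moreover have "x - y < ?n" using x assms(2) by simp
      ultimately show ?thesis using False by (metis diff_is_0_eq dvd_imp_le le_antisym not_less neq0_conv nat_le_linear)
    qed
  qed
  then show ?thesis by (simp add: distinct_map del: upt_Suc)
qed

lemma splice_path:
  assumes Q: "st_path V E ends s t qv qe"
    and ij: "i \<le> j" "j < length qv"
    and out: "\<forall>k<length qv. qv ! k \<in> S \<longrightarrow> i \<le> k \<and> k \<le> j"
    and aw: "is_walk V E ends av ae" and ad: "distinct av" and aS: "set av \<subseteq> S"
    and ah: "hd av = qv ! i" and al: "last av = qv ! j"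
  shows "st_path V E ends s t (take i qv @ av @ drop (Suc j) qv) (take i qe @ ae @ drop j qe)"
proof -
  have qw: "is_walk V E ends qv qe" and qd: "distinct qv" and qh: "hd qv = s" and ql: "last qv = t"
    using Q unfolding st_path_def by auto
  have lq: "length qv = Suc (length qe)" using qw unfolding is_walk_def by auto
  have ane: "av \<noteq> []" using aw unfolding is_walk_def by auto
  have w1: "is_walk V E ends (take (Suc i) qv) (take i qe)" using walk_take[OF qw] ij by simp
  have w3: "is_walk V E ends (drop j qv) (drop j qe)" using walk_drop[OF qw] ij by simp
  have "last (take (Suc i) qv) = hd av" using ah ij by (simp add: take_Suc_conv_app_nth)
  then have w12: "is_walk V E ends (take (Suc i) qv @ tl av) (take i qe @ ae)"
    using walk_append[OF w1 aw] by simp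
  have e1: "take (Suc i) qv @ tl av = take i qv @ av"
  proof -
    have "av = qv!i # tl av" using ah ane by (metis list.collapse)
    moreover have "take (Suc i) qv = take i qv @ [qv!i]" using ij by (simp add: take_Suc_conv_app_nth)
    ultimately show ?thesis by (metis append.assoc append_Cons append_Nil)
  qed
  have hd3: "hd (drop j qv) = qv ! j" using ij by (simp add: hd_drop_conv_nth)
  have "last (take i qv @ av) = hd (drop j qv)" using al hd3 ane by simp
  then have w: "is_walk V E ends (take i qv @ av @ tl (drop j qv)) (take i qe @ ae @ drop j qe)"
    using walk_append[OF w12[unfolded e1] w3] by simp
  have tld: "tl (drop j qv) = drop (Suc j) qv" by (simp add: drop_Suc tl_drop)
  have d1: "set (take i qv) \<inter> S = {}"
  proof -
    { fix x assume "x \<in> set (take i qv)" "x \<in> S"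
      then obtain k where "k < i" "k < length qv" "qv ! k = x" by (auto simp: in_set_conv_nth)
      then have False using out \<open>x \<in> S\<close> by auto }
    then show ?thesis by blast
  qed
  have d3: "set (drop (Suc j) qv) \<inter> S = {}"
  proof -
    { fix x assume "x \<in> set (drop (Suc j) qv)" "x \<in> S"
      then obtain k where k: "k < length qv - Suc j" "qv ! (Suc j + k) = x" by (auto simp: in_set_conv_nth)
      then have "Suc j + k < length qv" by simp
      then have False using out k(2) \<open>x \<in> S\<close> by fastforce
    }
    then show ?thesis by blast
  qed
  have d13: "set (take i qv) \<inter> set (drop (Suc j) qv) = {}"
  proof -
    have "set (take i qv) \<subseteq> set (take (Suc j) qv)" using ij by (simp add: set_take_subset_set_take)
    moreover have "set (take (Suc j) qv) \<inter> set (drop (Suc j) qv) = {}"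
      using qd by (metis append_take_drop_id distinct_append)
    ultimately show ?thesis by blast
  qed
  have dist: "distinct (take i qv @ av @ drop (Suc j) qv)"
    using d1 d3 d13 aS ad qd by (auto simp: distinct_append)
  have hd: "hd (take i qv @ av @ drop (Suc j) qv) = s"
  proof (cases i)
    case 0
    have "qv ! 0 = s" using qh ij by (metis hd_conv_nth list.size(3) not_less_zero)
    then show ?thesis using ah 0 ane by simp
  next
    case (Suc m) then show ?thesis using qh ij by (cases qv) auto
  qed
  have lst: "last (take i qv @ av @ drop (Suc j) qv) = t"
  proof (cases "Suc j = length qv")
    case True
    have "qv ! j = t" using ql True by (metis diff_Suc_1 last_conv_nth list.size(3) nat.distinct(1))
    then show ?thesis using al True ane by simp
  next
    case False then show ?thesis using ql ij by (simp add: last_drop)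
  qed
  show ?thesis using w tld dist hd lst unfolding st_path_def by simp
qed

lemma mod_lt2: "(x::nat) < 2*n \<Longrightarrow> x mod n = (if x < n then x else x - n)"
  by (simp add: mod_if le_mod_geq)

theorem mainTheorem10:
  fixes V :: "'v set" and E :: "'e set" and ends :: "'e \<Rightarrow> 'v set"
    and s t :: 'v and T :: "'e set"
  assumes "multigraph V E ends"
    and "s \<in> V" and "t \<in> V"
    and "reduced V E ends s t"
    and "tracking_set V E ends s t T"
    and "is_cycle V E ends vs es"
  shows "\<exists>e \<in> set es. e \<in> T"
proof (rule ccontr)
  assume "\<not> (\<exists>e \<in> set es. e \<in> T)"
  then have noT: "\<forall>e\<in>set es. e \<notin> T" by blast
  note cyc = assms(6)
  define n where "n = length es"
  define S where "S = set vs"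
  have n0: "n > 0" and lv: "length vs = n" and dvs: "distinct vs" and des: "distinct es"
    and esE: "set es \<subseteq> E"
    and cends: "\<And>x. x < n \<Longrightarrow> ends (es ! x) = {vs ! x, vs ! (Suc x mod n)}"
    using cyc unfolding is_cycle_def n_def by auto
  have endsS: "\<And>x. x < n \<Longrightarrow> ends (es ! x) \<subseteq> S"
    using cends lv n0 unfolding S_def by auto
  have "es ! 0 \<in> E" using esE n0 n_def by auto
  then obtain qv qe where Q: "st_path V E ends s t qv qe" and inq: "es ! 0 \<in> set qe"
    using assms(4) unfolding reduced_def by blast
  have qw: "is_walk V E ends qv qe" and qd: "distinct qv" using Q unfolding st_path_def by auto
  have lq: "length qv = Suc (length qe)" using qw unfolding is_walk_def by auto
  have qends: "\<And>k. k < length qe \<Longrightarrow> ends (qe ! k) = {qv ! k, qv ! Suc k}"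
    using qw unfolding is_walk_def by auto
  obtain p where p: "p < length qe" "qe ! p = es ! 0" using inq by (auto simp: in_set_conv_nth)
  have pS: "qv ! p \<in> S" "qv ! Suc p \<in> S" using qends[OF p(1)] endsS[OF n0] p(2) by auto
  define I where "I = {k. k < length qv \<and> qv ! k \<in> S}"
  have fI: "finite I" unfolding I_def by auto
  have pI: "p \<in> I" "Suc p \<in> I" using pS p lq unfolding I_def by auto
  define i where "i = Min I"
  define j where "j = Max I"
  have iI: "i \<in> I" and jI: "j \<in> I" unfolding i_def j_def using fI pI Min_in Max_in by blast+
  have ij: "i < j" using pI fI unfolding i_def j_def
    by (meson Min_le Max_ge le_trans lessI not_le)
  have jl: "j < length qv" using jI unfolding I_def by auto
  have out: "\<forall>k<length qv. qv ! k \<in> S \<longrightarrow> i \<le> k \<and> k \<le> j"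
    unfolding i_def j_def using fI I_def by auto
  obtain a where a: "a < n" "vs ! a = qv ! i" using iI lv unfolding I_def S_def by (auto simp: in_set_conv_nth)
  obtain b where b: "b < n" "vs ! b = qv ! j" using jI lv unfolding I_def S_def by (auto simp: in_set_conv_nth)
  have "qv ! i \<noteq> qv ! j" using qd ij jl by (simp add: nth_eq_iff_index_eq)
  then have ab: "a \<noteq> b" using a b by auto
  define d where "d = (if a \<le> b then b - a else b + n - a)"
  have d0: "0 < d" "d < n" using ab a b unfolding d_def by auto
  have dab: "(a + d) mod n = b" using ab a b unfolding d_def by (auto simp: mod_lt2)
  have dba: "(b + (n - d)) mod n = a" using ab a b unfolding d_def by (auto simp: mod_lt2)
  define av1 where "av1 = map (\<lambda>k. vs ! ((a+k) mod n)) [0..<Suc d]"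
  define ae1 where "ae1 = map (\<lambda>k. es ! ((a+k) mod n)) [0..<d]"
  define bv where "bv = map (\<lambda>k. vs ! ((b+k) mod n)) [0..<Suc (n-d)]"
  define be where "be = map (\<lambda>k. es ! ((b+k) mod n)) [0..<(n-d)]"
  have w1: "is_walk V E ends av1 ae1" unfolding av1_def ae1_def n_def by (rule arc_walk[OF cyc])
  have wb: "is_walk V E ends bv be" unfolding bv_def be_def n_def by (rule arc_walk[OF cyc])
  have w2: "is_walk V E ends (rev bv) (rev be)" using walk_rev[OF wb] .
  have di1: "distinct av1" unfolding av1_def n_def using arc_distinct[OF cyc, of d a] d0 unfolding n_def by simp
  have dib: "distinct bv" unfolding bv_def n_def using arc_distinct[OF cyc, of "n-d" b] d0 unfolding n_def by simp
  have S1: "set av1 \<subseteq> S" unfolding av1_def S_def using lv n0 by auto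
  have Sb: "set bv \<subseteq> S" unfolding bv_def S_def using lv n0 by auto
  have h1: "hd av1 = qv ! i" unfolding av1_def using a by (simp add: hd_map del: upt_Suc)
  have l1: "last av1 = qv ! j" unfolding av1_def using b dab by (simp add: last_map del: upt_Suc)
  have h2: "hd (rev bv) = qv ! i" unfolding bv_def using a dba by (simp add: hd_rev last_map del: upt_Suc)
  have l2: "last (rev bv) = qv ! j" unfolding bv_def using b by (simp add: last_rev hd_map del: upt_Suc)
  define v1 where "v1 = take i qv @ av1 @ drop (Suc j) qv"
  define e1 where "e1 = take i qe @ ae1 @ drop j qe"
  define v2 where "v2 = take i qv @ rev bv @ drop (Suc j) qv"
  define e2 where "e2 = take i qe @ rev be @ drop j qe"
  have P1: "st_path V E ends s t v1 e1" unfolding v1_def e1_def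
    using splice_path[OF Q _ jl out w1 di1 S1 h1 l1] ij by simp
  have P2: "st_path V E ends s t v2 e2" unfolding v2_def e2_def
    using splice_path[OF Q _ jl out w2 _ _ h2 l2] ij dib Sb by simp
  have sae1: "set ae1 \<subseteq> set es" unfolding ae1_def using n0 n_def by auto
  have sbe: "set be \<subseteq> set es" unfolding be_def using n0 n_def by auto
  have f1: "filter (\<lambda>e. e \<in> T) ae1 = []" using sae1 noT by (auto simp: filter_empty_conv)
  have f2: "filter (\<lambda>e. e \<in> T) (rev be) = []" using sbe noT by (auto simp: filter_empty_conv)
  have feq: "filter (\<lambda>e. e \<in> T) e1 = filter (\<lambda>e. e \<in> T) e2"
    unfolding e1_def e2_def using f1 f2 by simp
  have "es ! ((a+0) mod n) \<in> set ae1" unfolding ae1_def using d0 by (simp del: upt_Suc) (rule image_eqI[where x=0], simp_all)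
  then have ea1: "es ! a \<in> set e1" unfolding e1_def using a by simp
  have eaS: "ends (es ! a) \<subseteq> S" using endsS a by auto
  have nb: "es ! a \<notin> set be"
  proof
    assume "es ! a \<in> set be"
    then obtain k where k: "k < n - d" "es ! ((b+k) mod n) = es ! a" unfolding be_def by auto
    have "(b+k) mod n = a" using k a n0 des n_def by (simp add: nth_eq_iff_index_eq)
    moreover have "(b+k) mod n = (a + (d+k)) mod n" using dab by (metis add.assoc mod_add_left_eq)
    moreover have "a + (d+k) < 2*n" using a k by auto
    ultimately show False using k d0 a by (auto simp: mod_lt2 split: if_splits)
  qed
  have nt: "es ! a \<notin> set (take i qe)"
  proof
    assume "es ! a \<in> set (take i qe)"
    then obtain k where k: "k < i" "k < length qe" "qe ! k = es ! a" by (auto simp: in_set_conv_nth)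
    then have "qv ! k \<in> S" using qends[of k] eaS by auto
    moreover have "k < length qv" using k lq by simp
    ultimately show False using out k(1) by (meson not_le)
  qed
  have nd: "es ! a \<notin> set (drop j qe)"
  proof
    assume "es ! a \<in> set (drop j qe)"
    then obtain k where k: "k < length qe - j" "qe ! (j + k) = es ! a" by (auto simp: in_set_conv_nth)
    then have "qv ! Suc (j+k) \<in> S" using qends[of "j+k"] eaS by auto
    moreover have "Suc (j+k) < length qv" using k lq by auto
    ultimately show False using out by fastforce
  qed
  have "es ! a \<notin> set e2" unfolding e2_def using nb nt nd by auto
  then have "(v1, e1) \<noteq> (v2, e2)" using ea1 by auto
  then show False using assms(5) P1 P2 feq unfolding tracking_set_def by blast
qed

end
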